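(* Let $(G,\ell)$ be an instance of \textsc{Geometric Thickness} with $\ell\ge 2$, let $F$ be a minimum feedback edge set of $G$ of size $k$, and let $G_j$ be the graph constructed as follows. Let $G'$ be obtained from $G$ by exhaustively deleting vertices of degree $0$ or $1$; let $T$ be the forest with $V(T)=V(G')$ and $E(T)=E(G')\setminus F$; let $C$ be the union of $\{v\in V(T):\deg_T(v)\ge 3\}$ and the set of endpoints of edges of $F$; decompose $T$ into the $x$ edge-disjoint paths whose endpoints lie in $C$ and whose internal vertices lie outside $C$, and order them by length as $P_1,\dots,P_x$ with $|E(P_1)|\le\dots\le|E(P_x)|$; let $G_0=(C,F)$ and $G_i=G_0\cup P_1\cup\dots\cup P_i$ for $i\in[x]$; finally let $j$ be the smallest element of $\{0,\dots,x-1\}$ with $|E(P_{j+1})|>2(|E(G_j)|+x)$ if such an element exists, and $j=x$ otherwise. Then $G_j$ has at most $10k\cdot 81^k$ vertices.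
   Context: A feedback edge set of $G$ is a set of edges whose removal makes $G$ acyclic. \textsc{Geometric Thickness}: given a graph $G$ and integer $\ell$, decide whether there is a straight-line drawing of $G$ with an edge coloring in $[\ell]$ such that no two same-colored edges cross. *)

theory Defs
  imports Main
begin

definition simple_graph :: "'a set \<Rightarrow> 'a set set \<Rightarrow> bool" where
  "simple_graph V E \<longleftrightarrow> finite V \<and>
     (\<forall>e\<in>E. \<exists>u v. u \<noteq> v \<and> e = {u, v} \<and> u \<in> V \<and> v \<in> V)"

definition deg :: "'a set set \<Rightarrow> 'a \<Rightarrow> nat" where
  "deg E v = card {e \<in> E. v \<in> e}"

definition is_cycle :: "'a set set \<Rightarrow> 'a list \<Rightarrow> bool" where
  "is_cycle E cs \<longleftrightarrow> length cs \<ge> 3 \<and> distinct cs \<and>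
     (\<forall>i < length cs. {cs ! i, cs ! ((i + 1) mod length cs)} \<in> E)"

definition graph_acyclic :: "'a set set \<Rightarrow> bool" where
  "graph_acyclic E \<longleftrightarrow> \<not> (\<exists>cs. is_cycle E cs)"

definition feedback_edge_set :: "'a set set \<Rightarrow> 'a set set \<Rightarrow> bool" where
  "feedback_edge_set E F \<longleftrightarrow> F \<subseteq> E \<and> graph_acyclic (E - F)"

definition min_feedback_edge_set :: "'a set set \<Rightarrow> 'a set set \<Rightarrow> bool" where
  "min_feedback_edge_set E F \<longleftrightarrow> feedback_edge_set E F \<and>
     (\<forall>F'. feedback_edge_set E F' \<longrightarrow> card F \<le> card F')"

inductive prune_step :: "'a set \<times> 'a set set \<Rightarrow> 'a set \<times> 'a set set \<Rightarrow> bool" where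
  "v \<in> V \<Longrightarrow> deg E v \<le> 1 \<Longrightarrow> prune_step (V, E) (V - {v}, {e \<in> E. v \<notin> e})"

definition pruned_result :: "'a set \<Rightarrow> 'a set set \<Rightarrow> 'a set \<Rightarrow> 'a set set \<Rightarrow> bool" where
  "pruned_result V E V' E' \<longleftrightarrow> prune_step\<^sup>*\<^sup>* (V, E) (V', E') \<and> (\<forall>v\<in>V'. deg E' v \<ge> 2)"

definition path_edges :: "'a list \<Rightarrow> 'a set set" where
  "path_edges p = {{p ! i, p ! Suc i} | i. Suc i < length p}"

definition C_path :: "'a set set \<Rightarrow> 'a set \<Rightarrow> 'a list \<Rightarrow> bool" where
  "C_path T C p \<longleftrightarrow> length p \<ge> 2 \<and> distinct p \<and> path_edges p \<subseteq> T \<and>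
     hd p \<in> C \<and> last p \<in> C \<and> (\<forall>i. 0 < i \<and> i < length p - 1 \<longrightarrow> p ! i \<notin> C)"

end

theory Submission
  imports Defs
begin


definition twosets :: "'a set set \<Rightarrow> bool" where
  "twosets E \<longleftrightarrow> (\<forall>e\<in>E. \<exists>u v. u \<noteq> v \<and> e = {u, v})"

definition gpath :: "'a set set \<Rightarrow> 'a list \<Rightarrow> bool" where
  "gpath E p \<longleftrightarrow> distinct p \<and> set p \<subseteq> \<Union>E \<and> (\<forall>i. Suc i < length p \<longrightarrow> {p!i, p!Suc i} \<in> E)"

lemma other_end:
  assumes "twosets E" "e \<in> E" "w \<in> e"
  shows "\<exists>c. c \<noteq> w \<and> e = {w, c}"
  using assms unfolding twosets_def by fastforce

lemma cycle_exists:
  assumes fin: "finite E" and ts: "twosets E" and ne: "E \<noteq> {}"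
    and dg: "\<forall>v\<in>\<Union>E. deg E v \<ge> 2"
  shows "\<exists>cs. is_cycle E cs"
proof -
  have finU: "finite (\<Union>E)" using fin ts unfolding twosets_def by fastforce
  define S where "S = {p. gpath E p}"
  have "S \<subseteq> {p. set p \<subseteq> \<Union>E \<and> length p \<le> card (\<Union>E)}"
  proof
    fix p assume "p \<in> S"
    hence "distinct p" "set p \<subseteq> \<Union>E" unfolding S_def gpath_def by auto
    then show "p \<in> {p. set p \<subseteq> \<Union>E \<and> length p \<le> card (\<Union>E)}"
      using distinct_card card_mono[OF finU] by (metis mem_Collect_eq)
  qed
  hence finS: "finite S" using finite_lists_length_le[OF finU] finite_subset by blast
  obtain e where e: "e \<in> E" using ne by blast
  then obtain a b where ab: "a \<noteq> b" "e = {a,b}" using ts unfolding twosets_def by blast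
  have abS: "[a,b] \<in> S" unfolding S_def gpath_def using ab e by (auto simp: less_Suc_eq)
  define m where "m = Max (length ` S)"
  have m2: "m \<ge> 2"
  proof -
    have "length [a,b] \<le> m" unfolding m_def using abS finS by (intro Max_ge) (auto simp del: length_Cons list.size)
    then show ?thesis by simp
  qed
  obtain p where pS: "p \<in> S" and lp: "length p = m"
  proof -
    have "m \<in> length ` S" unfolding m_def using finS abS by (intro Max_in) auto
    then show ?thesis using that by blast
  qed
  have maxp: "length q \<le> m" if "q \<in> S" for q unfolding m_def using that finS by simp
  obtain w u rest where p: "p = w # u # rest"
  proof (cases p)
    case Nil then show ?thesis using lp m2 by simp
  next
    case (Cons w t) then show ?thesis using lp m2 that by (cases t) auto
  qed
  have gp: "gpath E p" using pS S_def by simp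
  have wU: "w \<in> \<Union>E" using gp p unfolding gpath_def by auto
  have "deg E w \<ge> 2" using dg wU by blast
  hence "card {e\<in>E. w \<in> e} \<ge> 2" unfolding deg_def .
  then obtain e1 e2 where e12: "e1 \<in> E" "w \<in> e1" "e2 \<in> E" "w \<in> e2" "e1 \<noteq> e2"
  proof -
    obtain A where "A \<subseteq> {e\<in>E. w \<in> e}" "card A = 2"
      using \<open>card {e\<in>E. w \<in> e} \<ge> 2\<close> by (meson obtain_subset_with_card_n)
    then obtain a1 a2 where "A = {a1,a2}" "a1 \<noteq> a2" by (meson card_2_iff)
    then show ?thesis using that \<open>A \<subseteq> _\<close> by blast
  qed
  obtain c1 where c1: "c1 \<noteq> w" "e1 = {w,c1}" using other_end[OF ts e12(1,2)] by blast
  obtain c2 where c2: "c2 \<noteq> w" "e2 = {w,c2}" using other_end[OF ts e12(3,4)] by blast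
  obtain c where c: "c \<noteq> w" "c \<noteq> u" "{w,c} \<in> E"
  proof (cases "c1 = u")
    case True
    hence "c2 \<noteq> u" using c1 c2 e12(5) by blast
    then show ?thesis using that c2 e12(3) by blast
  next
    case False then show ?thesis using that c1 e12(1) by blast
  qed
  show ?thesis
  proof (cases "c \<in> set p")
    case False
    have "gpath E (c # p)" unfolding gpath_def
    proof (intro conjI allI impI)
      show "distinct (c # p)" using False gp gpath_def by auto
      show "set (c # p) \<subseteq> \<Union> E" using gp c(3) unfolding gpath_def by auto
      fix i assume "Suc i < length (c # p)"
      then show "{(c # p) ! i, (c # p) ! Suc i} \<in> E"
        proof (cases i)
        case 0 then show ?thesis using c(3) p by (simp add: insert_commute)
      next
        case (Suc i') then show ?thesis using gp \<open>Suc i < length (c # p)\<close> unfolding gpath_def by simp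
      qed
    qed
    hence "c # p \<in> S" unfolding S_def by simp
    then show ?thesis using maxp lp by fastforce
  next
    case True
    then obtain i where i: "i < length p" "p ! i = c" by (meson in_set_conv_nth)
    have i2: "i \<ge> 2" proof (rule ccontr)
      assume "\<not> 2 \<le> i"
      hence "i = 0 \<or> i = 1" by auto
      then show False using i c p by auto
    qed
    define cs where "cs = take (Suc i) p"
    have lcs: "length cs = Suc i" using i cs_def by simp
    have "is_cycle E cs" unfolding is_cycle_def
    proof (intro conjI allI impI)
      show "3 \<le> length cs" using lcs i2 by simp
      show "distinct cs" using gp unfolding cs_def gpath_def by simp
      fix t assume t: "t < length cs"
      show "{cs ! t, cs ! ((t + 1) mod length cs)} \<in> E"
      proof (cases "t = i")
        case True
        have "cs ! t = c" using True i cs_def by simp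
        moreover have "cs ! ((t + 1) mod length cs) = w" using True lcs cs_def p by simp
        ultimately show ?thesis using c(3) by (simp add: insert_commute)
      next
        case False
        hence "Suc t < Suc i" using t lcs by simp
        hence "(t + 1) mod length cs = Suc t" using lcs by simp
        moreover have "Suc t < length p" using \<open>Suc t < Suc i\<close> i by simp
        ultimately show ?thesis using gp \<open>Suc t < Suc i\<close> cs_def unfolding gpath_def by simp
      qed
    qed
    then show ?thesis by blast
  qed
qed

lemma is_cycle_mono: "is_cycle E cs \<Longrightarrow> E \<subseteq> E2 \<Longrightarrow> is_cycle E2 cs"
  unfolding is_cycle_def by blast

lemma acyclic_mono: "graph_acyclic E2 \<Longrightarrow> E \<subseteq> E2 \<Longrightarrow> graph_acyclic E"
  unfolding graph_acyclic_def using is_cycle_mono by blast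

lemma forest_card:
  assumes "finite E" "twosets E" "graph_acyclic E"
  shows "card E \<le> card (\<Union>E)"
  using assms
proof (induction "card E" arbitrary: E rule: less_induct)
  case less
  show ?case
  proof (cases "E = {}")
    case True then show ?thesis by simp
  next
    case False
    have finU: "finite (\<Union>E)" using less.prems unfolding twosets_def by fastforce
    obtain v where v: "v \<in> \<Union>E" "deg E v \<le> 1"
      using cycle_exists[OF less.prems(1,2) False] less.prems(3) unfolding graph_acyclic_def
      by (metis not_less_eq_eq numeral_2_eq_2 One_nat_def)
    define Ev where "Ev = {e\<in>E. v \<notin> e}"
    have "E = Ev \<union> {e\<in>E. v \<in> e}" unfolding Ev_def by blast
    hence "card E \<le> card Ev + card {e\<in>E. v \<in> e}" by (metis card_Un_le)
    hence c1: "card E \<le> card Ev + 1" using v(2) unfolding deg_def by simp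
    have "Ev \<subset> E" using v(1) unfolding Ev_def by blast
    hence c2: "card Ev < card E" using less.prems(1) by (simp add: psubset_card_mono)
    have "card Ev \<le> card (\<Union>Ev)"
      apply (rule less.hyps[OF c2])
      using less.prems \<open>Ev \<subset> E\<close> acyclic_mono unfolding twosets_def
      by (auto intro: finite_subset)
    moreover have "\<Union>Ev \<subseteq> \<Union>E - {v}" unfolding Ev_def by blast
    hence "card (\<Union>Ev) \<le> card (\<Union>E - {v})" using finU by (simp add: card_mono)
    moreover have "card (\<Union>E - {v}) + 1 = card (\<Union>E)" using v(1) finU
      by (metis One_nat_def Suc_pred card_Diff_singleton card_gt_0_iff emptyE Suc_eq_plus1)
    ultimately show ?thesis using c1 by linarith
  qed
qed



lemma prune_inv:
  assumes "prune_step\<^sup>*\<^sup>* a b" "\<forall>e\<in>snd a. e \<subseteq> fst a"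
  shows "(\<forall>e\<in>snd b. e \<subseteq> fst b) \<and> snd b \<subseteq> snd a \<and> fst b \<subseteq> fst a"
  using assms
proof (induction rule: rtranclp_induct)
  case base then show ?case by simp
next
  case (step y z)
  from step.hyps(2) show ?case
  proof cases
    case (1 v V E)
    then show ?thesis using step.IH step.prems by auto
  qed
qed

lemma deg_sum:
  assumes "finite E" "twosets E"
  shows "(\<Sum>v\<in>\<Union>E. deg E v) = 2 * card E"
proof -
  have finU: "finite (\<Union>E)" using assms unfolding twosets_def by fastforce
  have "(\<Sum>v\<in>\<Union>E. card {e\<in>E. v \<in> e}) = (\<Sum>e\<in>E. (2::nat))"
  proof (rule sum_multicount_gen[OF finU assms(1)], intro ballI)
    fix e assume "e \<in> E"
    then obtain u v where "u \<noteq> v" "e = {u,v}" using assms(2) unfolding twosets_def by blast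
    moreover have "{i \<in> \<Union>E. i \<in> e} = e" using \<open>e \<in> E\<close> by blast
    ultimately show "card {i \<in> \<Union>E. i \<in> e} = 2" by simp
  qed
  then show ?thesis unfolding deg_def by simp
qed

lemma deg_pos:
  assumes "finite E" "v \<in> \<Union>E"
  shows "deg E v \<ge> 1"
proof -
  have "{e\<in>E. v \<in> e} \<noteq> {}" using assms(2) by blast
  then show ?thesis unfolding deg_def using assms(1)
    by (simp add: Suc_leI card_gt_0_iff)
qed

lemma AB_bound:
  assumes "finite E" "twosets E" "card E \<le> card (\<Union>E)"
  shows "card {v\<in>\<Union>E. deg E v \<ge> 3} \<le> card {v\<in>\<Union>E. deg E v \<le> 1}"
proof -
  define W where "W = \<Union>E"
  define A where "A = {v\<in>W. deg E v \<ge> 3}"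
  define B where "B = {v\<in>W. deg E v \<le> 1}"
  have finW: "finite W" using assms unfolding twosets_def W_def by fastforce
  have pt: "2 + (if v \<in> A then 1 else 0) \<le> deg E v + (if v \<in> B then 1 else 0)" if "v \<in> W" for v
    using deg_pos[OF assms(1), of v] that unfolding A_def B_def W_def by auto
  have "(\<Sum>v\<in>W. 2 + (if v \<in> A then 1 else 0)) \<le> (\<Sum>v\<in>W. deg E v + (if v \<in> B then 1 else (0::nat)))"
    by (rule sum_mono) (use pt in auto)
  moreover have "(\<Sum>v\<in>W. (if v \<in> A then 1 else (0::nat))) = card A"
    proof -
    have "W \<inter> A = A" unfolding A_def by blast
    then show ?thesis using sum.inter_restrict[OF finW, of "\<lambda>_. (1::nat)" A] by simp
  qed
  moreover have "(\<Sum>v\<in>W. (if v \<in> B then 1 else (0::nat))) = card B"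
    proof -
    have "W \<inter> B = B" unfolding B_def by blast
    then show ?thesis using sum.inter_restrict[OF finW, of "\<lambda>_. (1::nat)" B] by simp
  qed
  moreover have "(\<Sum>v\<in>W. deg E v) = 2 * card E" using deg_sum[OF assms(1,2)] W_def by simp
  moreover have "(\<Sum>v\<in>W. 2 + (if v \<in> A then 1 else (0::nat))) = 2 * card W + (\<Sum>v\<in>W. (if v \<in> A then 1 else (0::nat)))"
    by (subst sum.distrib) (simp add: mult.commute)
  moreover have "(\<Sum>v\<in>W. deg E v + (if v \<in> B then 1 else (0::nat))) = (\<Sum>v\<in>W. deg E v) + (\<Sum>v\<in>W. (if v \<in> B then 1 else (0::nat)))"
    by (simp add: sum.distrib)
  ultimately have "2 * card W + card A \<le> 2 * card E + card B"
    by linarith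
  then show ?thesis using assms(3) unfolding A_def B_def W_def by linarith
qed

lemma path_edges_img: "path_edges p = (\<lambda>i. {p!i, p!Suc i}) ` {..< length p - 1}"
  unfolding path_edges_def by auto

lemma card_path_edges:
  assumes "distinct p"
  shows "card (path_edges p) = length p - 1"
proof -
  have "inj_on (\<lambda>i. {p!i, p!Suc i}) {..< length p - 1}"
  proof (rule inj_onI)
    fix i j assume i: "i \<in> {..< length p - 1}" and j: "j \<in> {..< length p - 1}"
      and eq: "{p!i, p!Suc i} = {p!j, p!Suc j}"
    have li: "i < length p" "Suc i < length p" "j < length p" "Suc j < length p" using i j by auto
    from eq have "(p!i = p!j \<and> p!Suc i = p!Suc j) \<or> (p!i = p!Suc j \<and> p!Suc i = p!j)"
      by (auto simp: doubleton_eq_iff)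
    then show "i = j"
    proof (elim disjE conjE)
      assume "p!i = p!j" then show "i = j" using nth_eq_iff_index_eq[OF assms] li by blast
    next
      assume "p!i = p!Suc j" "p!Suc i = p!j"
      hence "i = Suc j" "Suc i = j" using nth_eq_iff_index_eq[OF assms] li by blast+
      then show "i = j" by simp
    qed
  qed
  then show ?thesis unfolding path_edges_img by (simp add: card_image)
qed

lemma finite_path_edges: "finite (path_edges p)"
  unfolding path_edges_img by simp

lemma path_vertex_edge:
  assumes "length p \<ge> 2" "v \<in> set p"
  shows "\<exists>e\<in>path_edges p. v \<in> e"
proof -
  obtain a where a: "a < length p" "p ! a = v" using assms(2) by (meson in_set_conv_nth)
  show ?thesis
  proof (cases "Suc a < length p")
    case True
    then show ?thesis using a unfolding path_edges_def by blast
  next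
    case False
    hence "a \<ge> 1" "Suc (a - 1) = a" using assms(1) a by auto
    then show ?thesis using a unfolding path_edges_def
      by (smt (verit, best) insertCI mem_Collect_eq)
  qed
qed

lemma edge_in_path: "e \<in> path_edges p \<Longrightarrow> e \<subseteq> set p"
  unfolding path_edges_def by auto

lemma C_path_hd_last:
  assumes "C_path T C p"
  shows "set p \<inter> C = {hd p, last p}" "hd p \<noteq> last p"
proof -
  have lp: "length p \<ge> 2" "distinct p" using assms unfolding C_path_def by auto
  have hd: "hd p = p ! 0" using lp by (cases p) auto
  have la: "last p = p ! (length p - 1)" using lp by (subst last_conv_nth) auto
  have ne: "0 \<noteq> length p - 1" "0 < length p" "length p - 1 < length p" using lp by auto
  have "p!0 \<noteq> p!(length p - 1)" using nth_eq_iff_index_eq[OF lp(2), of 0 "length p - 1"] ne by blast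
  then show "hd p \<noteq> last p" using hd la by simp
  show "set p \<inter> C = {hd p, last p}"
  proof
    show "set p \<inter> C \<subseteq> {hd p, last p}"
    proof
      fix v assume v: "v \<in> set p \<inter> C"
      then obtain a where a: "a < length p" "p ! a = v" by (meson IntD1 in_set_conv_nth)
      have "\<not> (0 < a \<and> a < length p - 1)" using assms v a unfolding C_path_def by auto
      hence "a = 0 \<or> a = length p - 1" using a by auto
      then show "v \<in> {hd p, last p}" using a hd la by auto
    qed
    show "{hd p, last p} \<subseteq> set p \<inter> C" using assms lp unfolding C_path_def
      by (metis Int_iff empty_subsetI hd_in_set insert_subset last_in_set list.size(3) not_numeral_le_zero)
  qed
qed

lemma C_path_card_internal:
  assumes "C_path T C p"
  shows "card (path_edges p) = card (set p - C) + 1"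
proof -
  have lp: "length p \<ge> 2" "distinct p" using assms unfolding C_path_def by auto
  have "card (set p) = card (set p - C) + card (set p \<inter> C)"
    by (metis Diff_Diff_Int Diff_disjoint Un_Diff_Int card_Un_disjoint finite_Diff finite_Int finite_set)
  moreover have "card (set p \<inter> C) = 2" using C_path_hd_last[OF assms] by simp
  moreover have "card (set p) = length p" using lp distinct_card by blast
  ultimately show ?thesis using card_path_edges[OF lp(2)] lp by simp
qed

lemma C_path_internal_edges:
  assumes "C_path T C p" "v \<in> set p - C"
  shows "\<exists>e1 e2. e1 \<noteq> e2 \<and> e1 \<in> path_edges p \<and> e2 \<in> path_edges p \<and> v \<in> e1 \<and> v \<in> e2"
proof -
  have lp: "length p \<ge> 2" "distinct p" using assms unfolding C_path_def by auto
  obtain a where a: "a < length p" "p ! a = v" using assms(2) by (meson DiffD1 in_set_conv_nth)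
  have "v \<noteq> hd p" "v \<noteq> last p" using C_path_hd_last(1)[OF assms(1)] assms(2) by auto
  moreover have "hd p = p ! 0" using lp by (cases p) auto
  moreover have "last p = p ! (length p - 1)" using lp by (subst last_conv_nth) auto
  ultimately have a1: "a \<noteq> 0" "a \<noteq> length p - 1" using a by metis+
  define e1 where "e1 = {p ! (a - 1), p ! Suc (a - 1)}"
  define e2 where "e2 = {p ! a, p ! Suc a}"
  have sa: "Suc (a - 1) = a" using a1 by simp
  have E1: "e1 \<in> path_edges p" unfolding e1_def path_edges_def using a a1 by (intro CollectI exI[of _ "a - 1"]) auto
  have E2: "e2 \<in> path_edges p" unfolding e2_def path_edges_def using a a1 by auto
  have "p ! (a - 1) \<noteq> p ! Suc a" "p ! (a - 1) \<noteq> p ! a"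
    using nth_eq_iff_index_eq[OF lp(2)] a a1 by auto
  hence "e1 \<noteq> e2" unfolding e1_def e2_def sa by (auto simp: doubleton_eq_iff)
  moreover have "v \<in> e1" "v \<in> e2" unfolding e1_def e2_def using a sa by auto
  ultimately show ?thesis using E1 E2 by blast
qed



theorem mainTheorem9:
  fixes V :: "'a set" and E :: "'a set set" and l k x :: nat
    and F :: "'a set set" and V' :: "'a set" and E' :: "'a set set"
    and Ps :: "'a list list"
  assumes "simple_graph V E"
    and "l \<ge> 2"
    and "min_feedback_edge_set E F"
    and "card F = k"
    and "pruned_result V E V' E'"
  defines "ET \<equiv> E' - F"
  defines "C \<equiv> {v \<in> V'. deg ET v \<ge> 3} \<union> \<Union>F"
  assumes "length Ps = x"
    and "\<forall>p\<in>set Ps. C_path ET C p"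
    and "\<forall>i<x. \<forall>i'<x. i \<noteq> i' \<longrightarrow> path_edges (Ps ! i) \<inter> path_edges (Ps ! i') = {}"
    and "(\<Union>p\<in>set Ps. path_edges p) = ET"
    and "sorted (map (\<lambda>p. card (path_edges p)) Ps)"
  defines "GV \<equiv> (\<lambda>i. C \<union> (\<Union>p\<in>set (take i Ps). set p))"
  defines "GE \<equiv> (\<lambda>i. F \<union> (\<Union>p\<in>set (take i Ps). path_edges p))"
  defines "j \<equiv> (if \<exists>i<x. card (path_edges (Ps ! i)) > 2 * (card (GE i) + x)
               then (LEAST i. i < x \<and> card (path_edges (Ps ! i)) > 2 * (card (GE i) + x))
               else x)"
  shows "card (GV j) \<le> 10 * k * 81 ^ k"
proof -
  note sg = assms(1)
  have sgd: "finite V \<and> (\<forall>e\<in>E. \<exists>u v. u \<noteq> v \<and> e = {u, v} \<and> u \<in> V \<and> v \<in> V)"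
    using sg unfolding simple_graph_def .
  have finV: "finite V" using sgd by (rule conjunct1)
  have Eok: "\<forall>e\<in>E. \<exists>u v. u \<noteq> v \<and> e = {u, v} \<and> u \<in> V \<and> v \<in> V" using sgd by (rule conjunct2)
  have tsE: "twosets E" using Eok unfolding twosets_def by blast
  have EsubV: "\<forall>e\<in>E. e \<subseteq> V"
  proof
    fix e assume "e \<in> E"
    then obtain u v where "e = {u, v}" "u \<in> V" "v \<in> V" using Eok by blast
    then show "e \<subseteq> V" by simp
  qed
  have finE: "finite E"
  proof -
    have "E \<subseteq> Pow V" using EsubV by blast
    then show ?thesis using finV finite_subset by blast
  qed
  have pr: "prune_step\<^sup>*\<^sup>* (V, E) (V', E')" using assms(5) unfolding pruned_result_def by simp
  have dg2: "\<forall>v\<in>V'. deg E' v \<ge> 2" using assms(5) unfolding pruned_result_def by simp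
  have pinv: "(\<forall>e\<in>E'. e \<subseteq> V') \<and> E' \<subseteq> E \<and> V' \<subseteq> V"
    using prune_inv[OF pr] EsubV by simp
  have finV': "finite V'" using pinv finV finite_subset by blast
  have fes: "F \<subseteq> E" "graph_acyclic (E - F)"
    using assms(3) unfolding min_feedback_edge_set_def feedback_edge_set_def by auto
  have finF: "finite F" using fes finE finite_subset by blast
  have ETsub: "ET \<subseteq> E - F" using pinv unfolding ET_def by blast
  have acET: "graph_acyclic ET" using acyclic_mono[OF fes(2) ETsub] .
  have finET: "finite ET" using ETsub finE finite_subset by blast
  have tsET: "twosets ET" using tsE ETsub unfolding twosets_def by blast
  define W where "W = \<Union>ET"
  have WV': "W \<subseteq> V'" using pinv unfolding W_def ET_def by blast
  have finW: "finite W" using WV' finV' finite_subset by blast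
  have forest: "card ET \<le> card W" using forest_card[OF finET tsET acET] W_def by simp
  have AB: "card {v\<in>W. deg ET v \<ge> 3} \<le> card {v\<in>W. deg ET v \<le> 1}"
    using AB_bound[OF finET tsET] forest W_def by simp
  have BF: "{v\<in>W. deg ET v \<le> 1} \<subseteq> \<Union>F"
  proof
    fix v assume v: "v \<in> {v\<in>W. deg ET v \<le> 1}"
    hence "v \<in> V'" using WV' by blast
    hence d2: "deg E' v \<ge> 2" using dg2 by blast
    show "v \<in> \<Union>F"
    proof (rule ccontr)
      assume "v \<notin> \<Union>F"
      hence "{e\<in>E'. v \<in> e} \<subseteq> {e\<in>ET. v \<in> e}" unfolding ET_def by blast
      hence "deg E' v \<le> deg ET v" unfolding deg_def using finET by (simp add: card_mono)
      then show False using v d2 by simp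
    qed
  qed
  have finUF: "finite (\<Union>F)"
  proof (rule finite_Union[OF finF])
    fix e assume "e \<in> F"
    hence "e \<subseteq> V" using fes(1) EsubV by blast
    then show "finite e" using finV finite_subset by blast
  qed
  have cUF: "card (\<Union>F) \<le> 2 * k"
  proof -
    have "card (\<Union>F) \<le> sum card F" by (rule card_Union_le_sum_card)
    also have "\<dots> = sum (\<lambda>_. 2) F"
    proof (rule sum.cong)
      fix e assume "e \<in> F"
      then obtain u v where "u \<noteq> v" "e = {u,v}" using fes(1) tsE unfolding twosets_def by blast
      then show "card e = 2" by simp
    qed simp
    also have "\<dots> = 2 * k" using assms(4) by simp
    finally show ?thesis .
  qed
  have A3: "{v \<in> V'. deg ET v \<ge> 3} \<subseteq> {v\<in>W. deg ET v \<ge> 3}"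
  proof
    fix v assume v: "v \<in> {v \<in> V'. deg ET v \<ge> 3}"
    have "{e\<in>ET. v \<in> e} \<noteq> {}"
    proof
      assume h: "{e\<in>ET. v \<in> e} = {}"
      have "deg ET v = 0" unfolding deg_def h by simp
      then show False using v by simp
    qed
    then show "v \<in> {v\<in>W. deg ET v \<ge> 3}" using v unfolding W_def by blast
  qed
  have finC: "finite C" unfolding C_def using finV' finUF by simp
  have cC: "card C \<le> 4 * k"
  proof -
    have "card C \<le> card {v \<in> V'. deg ET v \<ge> 3} + card (\<Union>F)" unfolding C_def by (rule card_Un_le)
    also have "card {v \<in> V'. deg ET v \<ge> 3} \<le> card {v\<in>W. deg ET v \<ge> 3}"
      using A3 finW by (simp add: card_mono)
    also have "\<dots> \<le> card {v\<in>W. deg ET v \<le> 1}" using AB .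
    also have "\<dots> \<le> card (\<Union>F)" using BF finUF by (simp add: card_mono)
    finally show ?thesis using cUF by simp
  qed
  have Cp: "C_path ET C (Ps ! i)" if "i < x" for i
    using assms(9) that assms(8) by simp
  have pdisj: "path_edges (Ps ! i) \<inter> path_edges (Ps ! i') = {}" if "i < x" "i' < x" "i \<noteq> i'" for i i'
    using assms(10) that by blast
  have unionE: "(\<Union>i<x. path_edges (Ps ! i)) = ET"
  proof -
    have sP: "set Ps = (\<lambda>i. Ps ! i) ` {..<x}" using assms(8) by (auto simp: set_conv_nth)
    have "(\<Union>i<x. path_edges (Ps ! i)) = (\<Union>p\<in>set Ps. path_edges p)" unfolding sP by (simp add: image_image)
    then show ?thesis using assms(11) by simp
  qed
  have disjI: "(set (Ps ! i) - C) \<inter> (set (Ps ! i') - C) = {}" if ij: "i < x" "i' < x" "i \<noteq> i'" for i i'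
  proof (rule ccontr)
    assume "(set (Ps ! i) - C) \<inter> (set (Ps ! i') - C) \<noteq> {}"
    then obtain v where v: "v \<in> set (Ps ! i) - C" "v \<in> set (Ps ! i') - C" by blast
    obtain e1 e2 where e12: "e1 \<noteq> e2" "e1 \<in> path_edges (Ps ! i)" "e2 \<in> path_edges (Ps ! i)" "v \<in> e1" "v \<in> e2"
      using C_path_internal_edges[OF Cp[OF ij(1)] v(1)] by blast
    obtain e3 e4 where e34: "e3 \<noteq> e4" "e3 \<in> path_edges (Ps ! i')" "e4 \<in> path_edges (Ps ! i')" "v \<in> e3" "v \<in> e4"
      using C_path_internal_edges[OF Cp[OF ij(2)] v(2)] by blast
    have d: "path_edges (Ps ! i) \<inter> path_edges (Ps ! i') = {}" using pdisj ij by blast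
    have sub: "path_edges (Ps ! i) \<union> path_edges (Ps ! i') \<subseteq> ET" using unionE ij by blast
    have sub4: "{e1,e2,e3,e4} \<subseteq> {e\<in>ET. v \<in> e}" using e12 e34 sub by blast
    moreover have "card {e1,e2,e3,e4} = 4"
    proof -
      have n: "e1 \<noteq> e3" "e1 \<noteq> e4" "e2 \<noteq> e3" "e2 \<noteq> e4" using e12 e34 d by blast+
      then show ?thesis using e12(1) e34(1) by simp
    qed
    moreover have "card {e1,e2,e3,e4} \<le> card {e\<in>ET. v \<in> e}" by (rule card_mono) (use finET sub4 in simp_all)
    ultimately have "deg ET v \<ge> 4" unfolding deg_def by simp
    moreover have "v \<in> V'" using e12 sub WV' unfolding W_def by blast
    ultimately have "v \<in> C" unfolding C_def by simp
    then show False using v by blast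
  qed
  have unionI: "(\<Union>i<x. set (Ps ! i) - C) = W - C"
  proof
    show "(\<Union>i<x. set (Ps ! i) - C) \<subseteq> W - C"
    proof
      fix v assume "v \<in> (\<Union>i<x. set (Ps ! i) - C)"
      then obtain i where i: "i < x" "v \<in> set (Ps ! i)" "v \<notin> C" by blast
      have "length (Ps ! i) \<ge> 2" using Cp[OF i(1)] unfolding C_path_def by simp
      then obtain e where e: "e \<in> path_edges (Ps ! i)" "v \<in> e" using path_vertex_edge[OF _ i(2)] by blast
      have "e \<in> ET" using unionE i(1) e(1) by blast
      then show "v \<in> W - C" using e(2) i(3) unfolding W_def by blast
    qed
    show "W - C \<subseteq> (\<Union>i<x. set (Ps ! i) - C)"
    proof
      fix v assume v: "v \<in> W - C"
      then obtain e where e: "e \<in> ET" "v \<in> e" unfolding W_def by blast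
      then obtain i where i: "i < x" "e \<in> path_edges (Ps ! i)" using unionE by blast
      have "v \<in> set (Ps ! i)" using edge_in_path[OF i(2)] e(2) by blast
      then show "v \<in> (\<Union>i<x. set (Ps ! i) - C)" using i(1) v by blast
    qed
  qed
  have cET: "card ET = (\<Sum>i<x. card (path_edges (Ps ! i)))"
  proof -
    have "card (\<Union>i<x. path_edges (Ps ! i)) = (\<Sum>i<x. card (path_edges (Ps ! i)))"
      by (rule card_UN_disjoint) (simp_all add: finite_path_edges pdisj)
    then show ?thesis using unionE by simp
  qed
  have cWC: "card (W - C) = (\<Sum>i<x. card (set (Ps ! i) - C))"
  proof -
    have "card (\<Union>i<x. set (Ps ! i) - C) = (\<Sum>i<x. card (set (Ps ! i) - C))"
      by (rule card_UN_disjoint) (simp_all add: disjI)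
    then show ?thesis using unionI by simp
  qed
  have "(\<Sum>i<x. card (path_edges (Ps ! i))) = (\<Sum>i<x. card (set (Ps ! i) - C) + 1)"
    using C_path_card_internal[OF Cp] by simp
  hence "card ET = card (W - C) + x" using cET cWC by (simp add: sum_Suc)
  moreover have "card W = card (W \<inter> C) + card (W - C)"
  proof -
    have "card (W - C) = card W - card (W \<inter> C)" using finW by (simp add: card_Diff_subset_Int)
    moreover have "card (W \<inter> C) \<le> card W" using finW by (simp add: card_mono)
    ultimately show ?thesis by simp
  qed
  moreover have "card (W \<inter> C) \<le> card C" using finC by (simp add: card_mono)
  ultimately have xC: "x \<le> card C" using forest by linarith
  have x4: "x \<le> 4 * k" using xC cC by simp
  have takeS: "take (Suc i) Ps = take i Ps @ [Ps ! i]" if "i < x" for i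
    using that assms(8) by (simp add: take_Suc_conv_app_nth)
  have GES: "GE (Suc i) = GE i \<union> path_edges (Ps ! i)" if "i < x" for i
    unfolding GE_def using takeS[OF that] by auto
  have GVS: "GV (Suc i) = GV i \<union> (set (Ps ! i) - C)" if "i < x" for i
    unfolding GV_def using takeS[OF that] by auto
  have finGE: "finite (GE i)" for i unfolding GE_def using finF by (simp add: finite_path_edges)
  have finGV: "finite (GV i)" for i unfolding GV_def using finC by simp
  have GEdisj: "GE i \<inter> path_edges (Ps ! i) = {}" if "i < x" for i
  proof -
    have "F \<inter> path_edges (Ps ! i) = {}" using unionE that unfolding ET_def by blast
    moreover have "path_edges q \<inter> path_edges (Ps ! i) = {}" if qin: "q \<in> set (take i Ps)" for q
    proof -
      obtain i' where "i' < length (take i Ps)" "take i Ps ! i' = q" using qin unfolding in_set_conv_nth by blast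
      hence "i' < i" "q = Ps ! i'" by auto
      moreover have "i' < x" "i' \<noteq> i" using \<open>i' < i\<close> \<open>i < x\<close> by auto
      ultimately show ?thesis using pdisj[of i' i] \<open>i < x\<close> by simp
    qed
    ultimately show ?thesis unfolding GE_def by blast
  qed
  have cGES: "card (GE (Suc i)) = card (GE i) + card (path_edges (Ps ! i))" if "i < x" for i
    using GES[OF that] GEdisj[OF that] finGE by (simp add: card_Un_disjoint finite_path_edges)
  have cGVS: "card (GV (Suc i)) \<le> card (GV i) + card (path_edges (Ps ! i))" if "i < x" for i
  proof -
    have "card (GV (Suc i)) \<le> card (GV i) + card (set (Ps ! i) - C)"
      using GVS[OF that] by (simp add: card_Un_le)
    then show ?thesis using C_path_card_internal[OF Cp[OF that]] by simp
  qed
  have jprops: "j \<le> x \<and> (\<forall>i<j. card (path_edges (Ps ! i)) \<le> 2 * (card (GE i) + x))"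
  proof (cases "\<exists>i<x. card (path_edges (Ps ! i)) > 2 * (card (GE i) + x)")
    case True
    let ?P = "\<lambda>i. i < x \<and> card (path_edges (Ps ! i)) > 2 * (card (GE i) + x)"
    have jd: "j = (LEAST i. ?P i)" unfolding j_def using True by simp
    have "?P j" unfolding jd by (rule LeastI_ex) (use True in blast)
    moreover have "\<not> ?P i" if "i < j" for i using not_less_Least[of i ?P] that jd by simp
    ultimately show ?thesis
    proof -
      assume pj: "?P j" and np: "\<And>i. i < j \<Longrightarrow> \<not> ?P i"
      have "j \<le> x" using pj by simp
      moreover have "\<forall>i<j. card (path_edges (Ps ! i)) \<le> 2 * (card (GE i) + x)"
      proof (intro allI impI)
        fix i assume "i < j"
        hence "\<not> ?P i" "i < x" using np pj by auto
        then show "card (path_edges (Ps ! i)) \<le> 2 * (card (GE i) + x)" by simp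
      qed
      ultimately show ?thesis by simp
    qed
  next
    case False
    have jx: "j = x" unfolding j_def using False by (rule if_not_P)
    show ?thesis using False jx by (metis not_less order.refl)
  qed
  have GE0: "GE 0 = F" unfolding GE_def by simp
  have GV0: "GV 0 = C" unfolding GV_def by simp
  have ind: "card (GV i) \<le> card C + card (GE i) \<and> card (GE i) + x \<le> 3 ^ i * (k + x)" if "i \<le> j" for i
    using that
  proof (induction i)
    case 0 then show ?case using GE0 GV0 assms(4) by simp
  next
    case (Suc i)
    have ij: "i < j" "i < x" using Suc.prems jprops by auto
    have IH: "card (GV i) \<le> card C + card (GE i)" "card (GE i) + x \<le> 3 ^ i * (k + x)"
      using Suc.IH Suc.prems by auto
    have b: "card (path_edges (Ps ! i)) \<le> 2 * (card (GE i) + x)" using jprops ij by blast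
    have "card (GV (Suc i)) \<le> card C + card (GE (Suc i))"
      using cGVS[OF ij(2)] cGES[OF ij(2)] IH(1) by simp
    moreover have "card (GE (Suc i)) + x \<le> 3 * (card (GE i) + x)"
      using cGES[OF ij(2)] b by simp
    hence "card (GE (Suc i)) + x \<le> 3 ^ Suc i * (k + x)" using IH(2) by simp
    ultimately show ?case by simp
  qed
  have fin: "card (GV j) \<le> 4 * k + 3 ^ j * (k + x)"
    using ind[of j] cC by simp
  have "(3::nat) ^ j \<le> 3 ^ (4 * k)" using jprops x4 by (simp add: power_increasing)
  also have "(3::nat) ^ (4 * k) = 81 ^ k" by (simp add: power_mult)
  finally have "3 ^ j * (k + x) \<le> 81 ^ k * (5 * k)" using x4 by (intro mult_mono) auto
  moreover have "4 * k \<le> 5 * k * 81 ^ k"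
  proof -
    have "(1::nat) \<le> 81 ^ k" by simp
    hence "5 * k * 1 \<le> 5 * k * 81 ^ k" by (intro mult_le_mono2)
    then show ?thesis by linarith
  qed
  moreover have "81 ^ k * (5 * k) + 5 * k * 81 ^ k = 10 * k * (81::nat) ^ k" by (simp add: algebra_simps)
  ultimately show ?thesis using fin by linarith
qed

end
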